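(* Let $E/\mathbb{Q}$ be given by the model $y^2=x^3+Ax+B$ ($A,B\in\mathbb{Z}$) described in the context and $X=\max\{|A|^3,|B|^2\}$. Let $0\le\delta\le1$. Let $P,Q\in E(\mathbb{Q})$ satisfy $X^{1/6}\le x(P)<x(Q)$ and $x(P)=x_1/s$, $x(Q)=x_2/s$ with $x_1,x_2\in\mathbb{Z}$, $s$ a positive integer, $\gcd(x_1,s)\le s^\delta$ and $\gcd(x_2,s)\le s^\delta$. Then $$h(P+Q)\le h(P)+2h(Q)+3\delta\,h(s)+2.9.$$
   Context: The model is obtained from a global minimal Weierstrass equation of $E$ by the substitution $x\mapsto \frac{1}{36}(x-3b_2)$, $y\mapsto \frac12(\frac{y}{108}-\frac{a_1}{36}(x-3b_2)-a_3)$. $h$ is the absolute logarithmic Weil height (so $h(s)=\log s$), and $h(P)=h(x(P))$. *)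

theory Defs
  imports Complex_Main
begin

section \<open>Weierstrass equations  y^2 + a1 xy + a3 y = x^3 + a2 x^2 + a4 x + a6\<close>

definition wb2 :: "'a::comm_ring_1 \<Rightarrow> 'a \<Rightarrow> 'a \<Rightarrow> 'a \<Rightarrow> 'a \<Rightarrow> 'a" where
  "wb2 a1 a2 a3 a4 a6 = a1^2 + 4*a2"
definition wb4 :: "'a::comm_ring_1 \<Rightarrow> 'a \<Rightarrow> 'a \<Rightarrow> 'a \<Rightarrow> 'a \<Rightarrow> 'a" where
  "wb4 a1 a2 a3 a4 a6 = 2*a4 + a1*a3"
definition wb6 :: "'a::comm_ring_1 \<Rightarrow> 'a \<Rightarrow> 'a \<Rightarrow> 'a \<Rightarrow> 'a \<Rightarrow> 'a" where
  "wb6 a1 a2 a3 a4 a6 = a3^2 + 4*a6"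
definition wb8 :: "'a::comm_ring_1 \<Rightarrow> 'a \<Rightarrow> 'a \<Rightarrow> 'a \<Rightarrow> 'a \<Rightarrow> 'a" where
  "wb8 a1 a2 a3 a4 a6 = a1^2*a6 + 4*a2*a6 - a1*a3*a4 + a2*a3^2 - a4^2"

definition wdisc :: "'a::comm_ring_1 \<Rightarrow> 'a \<Rightarrow> 'a \<Rightarrow> 'a \<Rightarrow> 'a \<Rightarrow> 'a" where
  "wdisc a1 a2 a3 a4 a6 =
     (let b2 = wb2 a1 a2 a3 a4 a6; b4 = wb4 a1 a2 a3 a4 a6;
          b6 = wb6 a1 a2 a3 a4 a6; b8 = wb8 a1 a2 a3 a4 a6
      in - (b2^2*b8) - 8*b4^3 - 27*b6^2 + 9*b2*b4*b6)"

definition wc4 :: "'a::comm_ring_1 \<Rightarrow> 'a \<Rightarrow> 'a \<Rightarrow> 'a \<Rightarrow> 'a \<Rightarrow> 'a" where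
  "wc4 a1 a2 a3 a4 a6 = (wb2 a1 a2 a3 a4 a6)^2 - 24 * wb4 a1 a2 a3 a4 a6"
definition wc6 :: "'a::comm_ring_1 \<Rightarrow> 'a \<Rightarrow> 'a \<Rightarrow> 'a \<Rightarrow> 'a \<Rightarrow> 'a" where
  "wc6 a1 a2 a3 a4 a6 = - ((wb2 a1 a2 a3 a4 a6)^3)
      + 36 * wb2 a1 a2 a3 a4 a6 * wb4 a1 a2 a3 a4 a6 - 216 * wb6 a1 a2 a3 a4 a6"

text \<open>Coefficients of the model obtained by the change of variables
  x = u^2 x' + r, y = u^3 y' + u^2 s x' + t (Silverman, Table 3.1).\<close>
definition wtrans :: "rat \<Rightarrow> rat \<Rightarrow> rat \<Rightarrow> rat \<Rightarrow> rat \<Rightarrow> rat \<Rightarrow> rat \<Rightarrow> rat \<Rightarrow> rat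
     \<Rightarrow> rat \<times> rat \<times> rat \<times> rat \<times> rat" where
  "wtrans u r s t a1 a2 a3 a4 a6 =
     ((a1 + 2*s) / u,
      (a2 - s*a1 + 3*r - s^2) / u^2,
      (a3 + r*a1 + 2*t) / u^3,
      (a4 - s*a3 + 2*r*a2 - (t + r*s)*a1 + 3*r^2 - 2*s*t) / u^4,
      (a6 + r*a4 + r^2*a2 + r^3 - t*a3 - t^2 - r*t*a1) / u^6)"

definition global_minimal :: "int \<Rightarrow> int \<Rightarrow> int \<Rightarrow> int \<Rightarrow> int \<Rightarrow> bool" where
  "global_minimal a1 a2 a3 a4 a6 \<longleftrightarrow>
     wdisc a1 a2 a3 a4 a6 \<noteq> 0 \<and>
     (\<forall>u r s t a1' a2' a3' a4' a6'. u \<noteq> 0 \<longrightarrow>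
        wtrans u r s t (of_int a1) (of_int a2) (of_int a3) (of_int a4) (of_int a6)
          = (rat_of_int a1', rat_of_int a2', rat_of_int a3', rat_of_int a4', rat_of_int a6') \<longrightarrow>
        \<bar>wdisc a1 a2 a3 a4 a6\<bar> \<le> \<bar>wdisc a1' a2' a3' a4' a6'\<bar>)"

definition on_curve :: "int \<Rightarrow> int \<Rightarrow> rat \<times> rat \<Rightarrow> bool" where
  "on_curve A B P \<longleftrightarrow> (snd P)^2 = (fst P)^3 + of_int A * fst P + of_int B"

text \<open>Sum of two affine points with distinct x-coordinates (chord construction);
  the result is again an affine point.\<close>
definition chord_add :: "rat \<times> rat \<Rightarrow> rat \<times> rat \<Rightarrow> rat \<times> rat" where
  "chord_add P Q =
     (let l = (snd Q - snd P) / (fst Q - fst P);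
          x3 = l^2 - fst P - fst Q
      in (x3, l * (fst P - x3) - snd P))"

definition hgt :: "rat \<Rightarrow> real" where
  "hgt q = (let (a, b) = quotient_of q in ln (real_of_int (max \<bar>a\<bar> b)))"

definition hpt :: "rat \<times> rat \<Rightarrow> real" where
  "hpt P = hgt (fst P)"

end

theory Submission
  imports Defs
begin


lemma sq_rat_int:
  assumes "(q::rat)^2 = of_int n" shows "\<exists>m. q = of_int m"
proof -
  obtain a b where qb: "quotient_of q = (a,b)" by (cases "quotient_of q") auto
  have b0: "b > 0" using quotient_of_denom_pos[OF qb] .
  have cp: "coprime a b" using quotient_of_coprime[OF qb] .
  have q: "q = of_int a / of_int b" using quotient_of_div[OF qb] .
  have "of_int a ^ 2 = (of_int n * of_int b ^ 2 :: rat)"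
    using assms b0 unfolding q by (simp add: field_simps)
  hence "a^2 = n * b^2" by (metis of_int_eq_iff of_int_mult of_int_power)
  hence "b^2 dvd a^2" by simp
  moreover have "coprime (b^2) (a^2)" using cp by (simp add: coprime_commute)
  ultimately have "is_unit (b^2)" using coprime_absorb_right by (metis coprime_commute coprime_dvd_mult_right_iff dvd_refl mult.comm_neutral)
  hence "b^2 = 1" by simp
  hence "b = 1" using b0 by (simp add: power2_eq_1_iff)
  thus ?thesis using q by auto
qed

lemma ln_int_mono: "0 < (m::int) \<Longrightarrow> m \<le> n \<Longrightarrow> ln (real_of_int m) \<le> ln (real_of_int n)"
  by simp

lemma ln_int_mult: "0 < (g::int) \<Longrightarrow> 0 < m \<Longrightarrow> ln (real_of_int g * real_of_int m) = ln (real_of_int g) + ln (real_of_int m)"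
  by (simp add: ln_mult)

lemma hgt_le:
  fixes N D :: int
  assumes "D > 0"
  shows "hgt (of_int N / of_int D) \<le> ln (real_of_int (max \<bar>N\<bar> D))"
proof -
  obtain a b where qb: "quotient_of (of_int N / of_int D) = (a,b)" by (cases "quotient_of (of_int N / of_int D)") auto
  have b0: "b > 0" using quotient_of_denom_pos[OF qb] .
  have cp: "coprime a b" using quotient_of_coprime[OF qb] .
  have q: "of_int N / of_int D = (of_int a / of_int b :: rat)" using quotient_of_div[OF qb] .
  hence "of_int N * of_int b = (of_int a * of_int D :: rat)" using b0 assms by (simp add: field_simps)
  hence e: "N * b = a * D" by (metis of_int_eq_iff of_int_mult)
  have "b dvd a * D" using e by (metis dvd_triv_right)
  hence "b dvd D" using cp by (simp add: coprime_commute coprime_dvd_mult_right_iff)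
  hence bD: "b \<le> D" using assms by (simp add: zdvd_imp_le)
  have aN: "\<bar>a\<bar> \<le> max \<bar>N\<bar> D"
  proof (cases "N = 0")
    case True
    then have "a = 0" using e assms by simp
    then show ?thesis using assms by simp
  next
    case False
    have "a dvd N" by (metis cp coprime_dvd_mult_left_iff dvd_triv_left e)
    hence "\<bar>a\<bar> \<le> \<bar>N\<bar>" using False by (simp add: dvd_imp_le_int)
    then show ?thesis by simp
  qed
  have "max \<bar>a\<bar> b \<le> max \<bar>N\<bar> D" using aN bD by simp
  moreover have "max \<bar>a\<bar> b > 0" using b0 by simp
  ultimately have "ln (real_of_int (max \<bar>a\<bar> b)) \<le> ln (real_of_int (max \<bar>N\<bar> D))"
    by (metis ln_int_mono)
  thus ?thesis unfolding hgt_def qb by (simp only: case_prod_conv Let_def)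
qed

lemma hgt_int: "s > 0 \<Longrightarrow> hgt (of_int s) = ln (real_of_int s)"
  unfolding hgt_def by simp

lemma hgt_lower:
  fixes x s :: int
  assumes "0 < s" "s \<le> x"
  shows "ln (real_of_int x) \<le> hgt (of_int x / of_int s) + ln (real_of_int (gcd x s))"
proof -
  obtain a b where qb: "quotient_of (of_int x / of_int s) = (a,b)" by (cases "quotient_of (of_int x / of_int s)") auto
  have b0: "b > 0" using quotient_of_denom_pos[OF qb] .
  have q: "of_int x / of_int s = (of_int a / of_int b :: rat)" using quotient_of_div[OF qb] .
  hence "of_int x * of_int b = (of_int a * of_int s :: rat)" using b0 assms by (simp add: field_simps)
  hence e: "x * b = a * s" by (metis of_int_eq_iff of_int_mult)
  define g where "g = gcd x s"
  have g0: "g > 0" using assms unfolding g_def by simp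
  obtain x' s' where x'0: "x = x' * g" and s'0: "s = s' * g" and "coprime x' s'"
    using gcd_coprime_exists[of x s] g0 unfolding g_def by auto
  have x': "x = g * x'" and s': "s = g * s'" using x'0 s'0 by simp_all
  have "x' * b = a * s'" using e x' s' g0 by (simp add: algebra_simps)
  hence "x' dvd a * s'" by (metis dvd_triv_left)
  hence "x' dvd a" using \<open>coprime x' s'\<close> by (simp add: coprime_dvd_mult_left_iff)
  moreover have "a \<noteq> 0" using e assms b0 by auto
  ultimately have "\<bar>x'\<bar> \<le> \<bar>a\<bar>" by (simp add: dvd_imp_le_int)
  hence "x \<le> g * max \<bar>a\<bar> b" using x' g0
    by (smt (verit) mult_left_mono)
  hence "real_of_int x \<le> real_of_int g * real_of_int (max \<bar>a\<bar> b)" by (metis of_int_le_iff of_int_mult)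
  hence "ln (real_of_int x) \<le> ln (real_of_int g * real_of_int (max \<bar>a\<bar> b))"
    using assms by simp
  also have "\<dots> = ln (real_of_int g) + ln (real_of_int (max \<bar>a\<bar> b))"
    using g0 b0 by (intro ln_int_mult) simp_all
  finally show ?thesis unfolding hgt_def qb g_def by (simp only: case_prod_conv Let_def)
qed

lemma ln12: "ln (12::real) \<le> 2.9"
proof -
  have "(1 + 1.45 + 1.45^2/2 :: real) \<le> exp 1.45" by (rule exp_lower_Taylor_quadratic) simp
  hence "(1 + 1.45 + 1.45^2/2 :: real)^2 \<le> exp 1.45 ^ 2" by (intro power_mono) auto
  also have "exp 1.45 ^ 2 = exp (2.9::real)" by (simp add: exp_double[symmetric] power2_eq_square flip: exp_add)
  moreover have "(12::real) \<le> (1 + 1.45 + 1.45^2/2 :: real)^2" by (simp add: power2_eq_square)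
  ultimately have "12 \<le> exp (2.9::real)" by linarith
  thus ?thesis by (metis exp_gt_zero ln_exp ln_le_cancel_iff zero_less_numeral)
qed

lemma disc_id: "(wc4 a1 a2 a3 a4 a6)^3 - (wc6 a1 a2 a3 a4 a6)^2 = (1728::int) * wdisc a1 a2 a3 a4 a6"
  unfolding wc4_def wc6_def wdisc_def wb2_def wb4_def wb6_def wb8_def Let_def by algebra





lemma t1: fixes yP :: rat and A B x1 s :: int assumes "s > 0"
  shows "rat_of_int (x1^3 + A * x1 * s^2 + B * s^3) = rat_of_int s ^ 3 * ((rat_of_int x1 / rat_of_int s)^3 + of_int A * (rat_of_int x1 / rat_of_int s) + of_int B)"
proof -
  have "rat_of_int s \<noteq> 0" using assms by simp
  then show ?thesis by (simp add: power_divide algebra_simps power2_eq_square power3_eq_cube)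
qed
lemma t2: fixes x3 xP xQ yP yQ :: rat assumes "xQ - xP \<noteq> 0"
  and "x3 = ((yQ - yP) / (xQ - xP))^2 - xP - xQ"
  shows "x3 * (xQ - xP)^2 = (yQ - yP)^2 - (xP + xQ) * (xQ - xP)^2"
proof -
  have d2: "(xQ - xP)^2 \<noteq> 0" using assms(1) by simp
  have "x3 * (xQ - xP)^2 = ((yQ - yP)^2 / (xQ - xP)^2) * (xQ - xP)^2 - (xP + xQ) * (xQ - xP)^2"
    unfolding assms(2) power_divide by (simp add: algebra_simps)
  also have "((yQ - yP)^2 / (xQ - xP)^2) * (xQ - xP)^2 = (yQ - yP)^2" using d2 by simp
  finally show ?thesis .
qed
lemma t3: fixes x3 xP xQ yP yQ A B :: rat
  assumes "yP^2 = xP^3 + A * xP + B" "yQ^2 = xQ^3 + A * xQ + B"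
  shows "yQ^2 + yP^2 - 2 * yP * yQ - (xP + xQ) * (xQ - xP)^2 = (xP * xQ + A) * (xP + xQ) + 2 * B - 2 * yP * yQ"
  unfolding assms by (simp add: power2_eq_square power3_eq_cube algebra_simps)
lemma t4: fixes x3 :: rat and s x1 x2 :: int assumes "s > 0"
  shows "x3 * rat_of_int (s * (x2 - x1)^2) = rat_of_int s ^ 3 * (x3 * (rat_of_int x2 / rat_of_int s - rat_of_int x1 / rat_of_int s)^2)"
proof -
  have "rat_of_int s \<noteq> 0" using assms by simp
  then show ?thesis by (simp add: diff_divide_distrib[symmetric] power_divide power2_eq_square power3_eq_cube)
qed
lemma t5: fixes s x1 x2 A B m :: int assumes "s > 0"
  shows "rat_of_int s ^ 3 * ((rat_of_int x1 / rat_of_int s * (rat_of_int x2 / rat_of_int s) + of_int A) * (rat_of_int x1 / rat_of_int s + rat_of_int x2 / rat_of_int s) + 2 * of_int B) - 2 * rat_of_int m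
    = rat_of_int ((x1 * x2 + A * s^2) * (x1 + x2) + 2 * B * s^3 - 2 * m)"
proof -
  have "rat_of_int s \<noteq> 0" using assms by simp
  then show ?thesis by (simp add: field_simps power2_eq_square power3_eq_cube)
qed

lemma neg_abs_mult: "0 \<le> (c::int) \<Longrightarrow> - (a * c) \<le> \<bar>a\<bar> * c"
  by (metis abs_ge_minus_self minus_mult_left mult_right_mono)

theorem lemma3p2:
  fixes a1 a2 a3 a4 a6 A B x1 x2 s :: int and \<delta> :: real and P Q :: "rat \<times> rat"
  assumes "global_minimal a1 a2 a3 a4 a6"
    and "A = -27 * wc4 a1 a2 a3 a4 a6"
    and "B = -54 * wc6 a1 a2 a3 a4 a6"
    and "0 \<le> \<delta>" and "\<delta> \<le> 1"
    and "on_curve A B P" and "on_curve A B Q"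
    and "real_of_int (max (\<bar>A\<bar>^3) (B^2)) powr (1/6) \<le> real_of_rat (fst P)"
    and "fst P < fst Q"
    and "s > 0"
    and "fst P = of_int x1 / of_int s" and "fst Q = of_int x2 / of_int s"
    and "real_of_int (gcd x1 s) \<le> real_of_int s powr \<delta>"
    and "real_of_int (gcd x2 s) \<le> real_of_int s powr \<delta>"
  shows "hpt (chord_add P Q) \<le> hpt P + 2 * hpt Q + 3 * \<delta> * hgt (of_int s) + 2.9"
proof -
  note s0 = \<open>s > 0\<close>
  define X where "X = max (\<bar>A\<bar>^3) (B^2)"
  have X1: "X \<ge> 1"
  proof (rule ccontr)
    assume "\<not> X \<ge> 1"
    hence "X \<le> 0" by simp
    hence "\<bar>A\<bar>^3 \<le> 0" "B^2 \<le> 0" unfolding X_def by auto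
    hence "A = 0" "B = 0" by (simp_all add: abs_le_zero_iff)
    hence "wc4 a1 a2 a3 a4 a6 = 0" "wc6 a1 a2 a3 a4 a6 = 0" using assms(2,3) by simp_all
    hence "wdisc a1 a2 a3 a4 a6 = 0" using disc_id[of a1 a2 a3 a4 a6] by simp
    thus False using assms(1) unfolding global_minimal_def by simp
  qed
  define t where "t = real_of_int x1 / real_of_int s"
  have tP: "real_of_rat (fst P) = t" unfolding t_def assms(11) by (simp add: of_rat_divide)
  have Xp: "real_of_int X powr (1/6) \<le> t" using assms(8) tP X_def by simp
  have "1 \<le> real_of_int X powr (1/6)" using X1 by (intro ge_one_powr_ge_zero) auto
  hence t1: "1 \<le> t" using Xp by linarith
  hence x1s: "s \<le> x1" using s0 unfolding t_def by (simp add: field_simps)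
  have "(real_of_int X powr (1/6)) ^ 6 = real_of_int X"
    using X1 by (simp add: powr_realpow[symmetric] powr_powr)
  hence "real_of_int X \<le> t ^ 6" using Xp by (metis power_mono powr_ge_zero)
  hence "real_of_int X * real_of_int s ^ 6 \<le> real_of_int x1 ^ 6" using s0 unfolding t_def
    by (simp add: field_simps)
  hence Xs: "X * s^6 \<le> x1^6" by (metis of_int_le_iff of_int_mult of_int_power)
  have "(\<bar>A\<bar> * s^2)^3 \<le> (x1^2)^3"
  proof -
    have "(\<bar>A\<bar> * s^2)^3 = \<bar>A\<bar>^3 * s^6" by (simp add: power_mult_distrib flip: power_mult)
    also have "\<dots> \<le> X * s^6" unfolding X_def by (intro mult_right_mono) auto
    also have "\<dots> \<le> (x1^2)^3" using Xs by (simp flip: power_mult)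
    finally show ?thesis .
  qed
  hence Ab: "\<bar>A\<bar> * s^2 \<le> x1^2"
    by - (rule power_le_imp_le_base[where n=2], simp_all add: numeral_3_eq_3)
  have "(\<bar>B\<bar> * s^3)^2 \<le> (x1^3)^2"
  proof -
    have "(\<bar>B\<bar> * s^3)^2 = B^2 * s^6" by (simp add: power_mult_distrib flip: power_mult)
    also have "\<dots> \<le> X * s^6" unfolding X_def by (intro mult_right_mono) auto
    also have "\<dots> \<le> (x1^3)^2" using Xs by (simp flip: power_mult)
    finally show ?thesis .
  qed
  moreover have "0 \<le> x1^3" using x1s s0 by simp
  ultimately have Bb: "\<bar>B\<bar> * s^3 \<le> x1^3"
    by - (rule power_le_imp_le_base[where n=1], simp_all add: numeral_2_eq_2)
  have x12: "x1 < x2" using assms(9) s0 unfolding assms(11,12) by (simp add: divide_less_cancel)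
  obtain xP yP where P: "P = (xP, yP)" by (cases P) auto
  obtain xQ yQ where Q: "Q = (xQ, yQ)" by (cases Q) auto
  have xP: "xP = of_int x1 / of_int s" and xQ: "xQ = of_int x2 / of_int s" using assms(11,12) P Q by simp_all
  have cP: "yP^2 = xP^3 + of_int A * xP + of_int B" using assms(6) P unfolding on_curve_def by simp
  have cQ: "yQ^2 = xQ^3 + of_int A * xQ + of_int B" using assms(7) Q unfolding on_curve_def by simp
  define F1 where "F1 = x1^3 + A * x1 * s^2 + B * s^3"
  define F2 where "F2 = x2^3 + A * x2 * s^2 + B * s^3"
  have F1r: "rat_of_int F1 = rat_of_int s ^ 3 * yP^2" unfolding F1_def cP xP using s0
    by (simp add: field_simps power3_eq_cube power2_eq_square)
  have F2r: "rat_of_int F2 = rat_of_int s ^ 3 * yQ^2" unfolding F2_def cQ xQ using s0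
    by (simp add: field_simps power3_eq_cube power2_eq_square)
  have "(rat_of_int s ^ 3 * yP * yQ)^2 = rat_of_int (F1 * F2)" unfolding of_int_mult F1r F2r
    by (simp add: power_mult_distrib power2_eq_square power3_eq_cube)
  then obtain m where m: "rat_of_int s ^ 3 * yP * yQ = of_int m" using sq_rat_int by blast
  have m2: "m^2 = F1 * F2"
  proof -
    have "rat_of_int (m^2) = rat_of_int (F1 * F2)"
      using \<open>(rat_of_int s ^ 3 * yP * yQ)^2 = rat_of_int (F1 * F2)\<close> m by simp
    thus ?thesis by (simp only: of_int_eq_iff)
  qed
  have F1nn: "F1 \<ge> 0"
  proof -
    have "rat_of_int F1 \<ge> 0" unfolding F1r using s0 by simp
    thus ?thesis by simp
  qed
  define N where "N = (x1 * x2 + A * s^2) * (x1 + x2) + 2 * B * s^3 - 2 * m"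
  define D where "D = s * (x2 - x1)^2"
  have D0: "D > 0" unfolding D_def using s0 x12 by simp
  have dne: "xQ - xP \<noteq> 0" using assms(9) P Q by simp
  define x3 where "x3 = fst (chord_add P Q)"
  have x3e: "x3 = ((yQ - yP) / (xQ - xP))^2 - xP - xQ" unfolding x3_def chord_add_def P Q Let_def by simp
  have key: "x3 * (xQ - xP)^2 = (xP * xQ + of_int A) * (xP + xQ) + 2 * of_int B - 2 * yP * yQ"
  proof -
    have "x3 * (xQ - xP)^2 = (yQ - yP)^2 - (xP + xQ) * (xQ - xP)^2"
      using t2[OF dne x3e] .
    also have "\<dots> = yQ^2 + yP^2 - 2 * yP * yQ - (xP + xQ) * (xQ - xP)^2" by (simp add: power2_eq_square algebra_simps)
    also have "\<dots> = (xP * xQ + of_int A) * (xP + xQ) + 2 * of_int B - 2 * yP * yQ"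
      using t3[OF cP cQ] .
    finally show ?thesis .
  qed
  have x3N: "x3 = rat_of_int N / rat_of_int D"
  proof -
    have "x3 * rat_of_int D = rat_of_int s ^ 3 * (x3 * (xQ - xP)^2)"
      unfolding D_def xP xQ using t4[OF s0] .
    also have "\<dots> = rat_of_int s ^ 3 * ((xP * xQ + of_int A) * (xP + xQ) + 2 * of_int B) - 2 * (rat_of_int s ^ 3 * yP * yQ)"
      unfolding key by (simp add: algebra_simps)
    also have "\<dots> = rat_of_int N"
      unfolding m N_def xP xQ using t5[OF s0] .
    finally show ?thesis using D0 by (simp add: field_simps)
  qed
  have F2nn: "F2 \<ge> 0"
  proof -
    have "rat_of_int F2 \<ge> 0" unfolding F2r using s0 by simp
    thus ?thesis by simp
  qed
  have x1p: "x1 > 0" using s0 x1s by simp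
  have x2p: "x2 > 0" using x1p x12 by simp
  have As: "A * s^2 \<le> \<bar>A\<bar> * s^2" by (intro mult_right_mono) auto
  have As': "- (A * s^2) \<le> \<bar>A\<bar> * s^2" by (intro neg_abs_mult) simp
  have Bs: "B * s^3 \<le> \<bar>B\<bar> * s^3" using s0 by (intro mult_right_mono) auto
  have Bs': "- (B * s^3) \<le> \<bar>B\<bar> * s^3" using s0 by (intro neg_abs_mult) simp
  have x1x2: "x1^2 \<le> x1 * x2" using x12 x1p by (simp add: power2_eq_square)
  have c1: "A * x1 * s^2 \<le> x1^2 * x1"
  proof -
    have "A * x1 * s^2 = (A * s^2) * x1" by simp
    also have "\<dots> \<le> x1^2 * x1" using As Ab x1p by (intro mult_right_mono) auto
    finally show ?thesis .
  qed
  have c2: "A * x2 * s^2 \<le> x1^2 * x2"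
  proof -
    have "A * x2 * s^2 = (A * s^2) * x2" by simp
    also have "\<dots> \<le> x1^2 * x2" using As Ab x2p by (intro mult_right_mono) auto
    finally show ?thesis .
  qed
  have F1b: "F1 \<le> 3 * x1^3" unfolding F1_def using c1 Bs Bb by (simp add: power3_eq_cube power2_eq_square)
  have x1c: "x1^3 \<le> x2^3" using x12 x1p by (intro power_mono) auto
  have x12c: "x1^2 * x2 \<le> x2^3"
  proof -
    have "x1^2 \<le> x2^2" using x12 x1p by (intro power_mono) auto
    hence "x1^2 * x2 \<le> x2^2 * x2" using x2p by (intro mult_right_mono) auto
    thus ?thesis by (simp add: power3_eq_cube power2_eq_square)
  qed
  have F2b: "F2 \<le> 3 * x2^3" unfolding F2_def using c2 Bs Bb x1c x12c by simp
  have "m^2 \<le> (3 * x1^3) * (3 * x2^3)" unfolding m2 using F1b F2b F1nn F2nn x1p by (intro mult_mono) auto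
  also have "\<dots> \<le> (3 * x1 * x2^2)^2"
  proof -
    have "x1^3 * x2^3 = (x1^2 * x2^3) * x1" by (simp add: power2_eq_square power3_eq_cube)
    also have "\<dots> \<le> (x1^2 * x2^3) * x2" using x12 x1p x2p by (intro mult_left_mono) auto
    finally have "x1^3 * x2^3 \<le> x1^2 * x2^4" by (simp add: power2_eq_square power3_eq_cube power4_eq_xxxx)
    moreover have "(3 * x1^3) * (3 * x2^3) = 9 * (x1^3 * x2^3)" by simp
    moreover have "(3 * x1 * x2^2)^2 = 9 * (x1^2 * x2^4)" by algebra
    ultimately show ?thesis by linarith
  qed
  finally have "\<bar>m\<bar> \<le> \<bar>3 * x1 * x2^2\<bar>" by (simp only: abs_le_square_iff)
  hence mb: "\<bar>m\<bar> \<le> 3 * x1 * x2^2" using x1p by simp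
  have t1b: "\<bar>x1 * x2 + A * s^2\<bar> \<le> 2 * (x1 * x2)" using As As' Ab x1x2 by linarith
  have "\<bar>(x1 * x2 + A * s^2) * (x1 + x2)\<bar> = \<bar>x1 * x2 + A * s^2\<bar> * (x1 + x2)" using x1p x2p by (simp add: abs_mult)
  also have "\<dots> \<le> (2 * (x1 * x2)) * (2 * x2)" using t1b x12 x1p x2p by (intro mult_mono) auto
  finally have t2b: "\<bar>(x1 * x2 + A * s^2) * (x1 + x2)\<bar> \<le> 4 * (x1 * x2^2)" by (simp add: power2_eq_square)
  have "x1^3 \<le> x1 * x2^2"
  proof -
    have "x1^2 \<le> x2^2" using x12 x1p by (intro power_mono) auto
    hence "x1 * x1^2 \<le> x1 * x2^2" using x1p by (intro mult_left_mono) auto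
    thus ?thesis by (simp add: power3_eq_cube power2_eq_square)
  qed
  hence t3b: "\<bar>2 * B * s^3\<bar> \<le> 2 * (x1 * x2^2)" using Bs Bs' Bb by linarith
  have Nb: "\<bar>N\<bar> \<le> 12 * (x1 * x2^2)" unfolding N_def using t2b t3b mb by linarith
  have Db: "D \<le> 12 * (x1 * x2^2)"
  proof -
    have "(x2 - x1)^2 \<le> x2^2" using x12 x1p by (intro power_mono) auto
    hence "s * (x2 - x1)^2 \<le> x1 * x2^2" using x1s s0 by (intro mult_mono) auto
    moreover have "0 \<le> x1 * x2^2" using x1p by simp
    ultimately show ?thesis unfolding D_def by linarith
  qed
  have "hpt (chord_add P Q) = hgt x3" unfolding hpt_def x3_def ..
  also have "\<dots> \<le> ln (real_of_int (max \<bar>N\<bar> D))" unfolding x3N using hgt_le[OF D0] .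
  also have "\<dots> \<le> ln (real_of_int (12 * (x1 * x2^2)))" using D0 Nb Db by (intro ln_int_mono) auto
  also have "\<dots> = ln 12 + ln (real_of_int x1) + 2 * ln (real_of_int x2)"
    using x1p x2p by (simp add: ln_mult power2_eq_square)
  finally have h1: "hpt (chord_add P Q) \<le> ln 12 + ln (real_of_int x1) + 2 * ln (real_of_int x2)" .
  have lg: "ln (real_of_int (gcd x s)) \<le> \<delta> * ln (real_of_int s)"
    if "real_of_int (gcd x s) \<le> real_of_int s powr \<delta>" for x
  proof -
    have "gcd x s > 0" using s0 by simp
    hence "ln (real_of_int (gcd x s)) \<le> ln (real_of_int s powr \<delta>)" using that s0
      by (subst ln_le_cancel_iff) simp_all
    also have "\<dots> = \<delta> * ln (real_of_int s)" using s0 by (simp add: ln_powr)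
    finally show ?thesis .
  qed
  have hP: "ln (real_of_int x1) \<le> hpt P + \<delta> * ln (real_of_int s)"
    using hgt_lower[OF s0 x1s] lg[OF assms(13)] unfolding hpt_def assms(11) by linarith
  have hQ: "ln (real_of_int x2) \<le> hpt Q + \<delta> * ln (real_of_int s)"
    using hgt_lower[OF s0, of x2] x1s x12 lg[OF assms(14)] unfolding hpt_def assms(12) by linarith
  have hs: "hgt (of_int s) = ln (real_of_int s)" using hgt_int[OF s0] .
  have e3: "3 * \<delta> * hgt (of_int s) = 3 * (\<delta> * ln (real_of_int s))" using hs by simp
  show ?thesis using h1 hP hQ e3 ln12 by linarith
qed
end
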